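(* Suppose Assumption 1 holds. Then for any $\ell=1,\dots,\mathsf{L}$ the joint kernel $\bm p_\ell$ satisfies a drift condition: there exist a measurable function $V:\mathsf{X}^2\to[1,\infty)$, a small set $S\in\mathcal{B}(\mathsf{X}^2)$ for $\bm p_\ell$, and constants $\lambda\in(0,1)$, $\kappa<\infty$ such that $$(\bm P_\ell V)(\bm\theta_\ell)\le\lambda V(\bm\theta_\ell)+\kappa\mathbf 1_{\{\bm\theta_\ell\in S\}}\qquad\forall\bm\theta_\ell\in\mathsf{X}^2.$$
   Context: Setting: $\mathsf{X}$ separable Banach space, prior $\mu_{\mathrm{pr}}$; posteriors $\mu^y_j$ with $\mu_{\mathrm{pr}}$-densities $\pi^y_j$; proposal density $Q_\ell$ w.r.t. $\mu_{\mathrm{pr}}$; $\alpha_j(\theta,z)=\min\{1,\frac{\pi^y_j(z)Q_\ell(\theta)}{\pi^y_j(\theta)Q_\ell(z)}\}$. Joint kernel for $\bm\theta_\ell=(\theta_{\ell,\ell-1},\theta_{\ell,\ell})$: $\bm p_\ell(\bm\theta_\ell,A)=\int\min\{\alpha_{\ell-1}(\theta_{\ell,\ell-1},z),\alpha_\ell(\theta_{\ell,\ell},z)\}\mathbf 1_{\{(z,z)\in A\}}Q_\ell(z)\mu_{\mathrm{pr}}(\mathrm{d}z)+\int(\alpha_{\ell-1}(\theta_{\ell,\ell-1},z)-\alpha_\ell(\theta_{\ell,\ell},z))^+\mathbf 1_{\{(z,\theta_{\ell,\ell})\in A\}}Q_\ell(z)\mu_{\mathrm{pr}}(\mathrm{d}z)+\int(\alpha_\ell(\theta_{\ell,\ell},z)-\alpha_{\ell-1}(\theta_{\ell,\ell-1},z))^+\mathbf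 1_{\{(\theta_{\ell,\ell-1},z)\in A\}}Q_\ell(z)\mu_{\mathrm{pr}}(\mathrm{d}z)+\mathbf 1_{\{\bm\theta_\ell\in A\}}(1-\int\max\{\alpha_{\ell-1}(\theta_{\ell,\ell-1},z),\alpha_\ell(\theta_{\ell,\ell},z)\}Q_\ell(z)\mu_{\mathrm{pr}}(\mathrm{d}z))$, operator $(\bm P_\ell f)(\bm\theta)=\int f\,\mathrm{d}\bm p_\ell(\bm\theta,\cdot)$. A set $S$ is small for a kernel $p$ if there exist $m\in\mathbb{N}$ and a non-trivial positive measure $\nu$ with $p^m(x,A)\ge\nu(A)$ for all $x\in S$ and measurable $A$. Assumption 1: (1.1) $Q_\ell$ continuous and positive; (1.2) each $\pi^y_j$ continuous and positive; (1.3) for $j=\ell-1,\ell$, all $c_r>0$, $\{\theta: Q_\ell(\theta)/\pi^y_j(\theta)\le c_r\}$ compact; (1.4) $\exists c\in(0,1)$ independent of $\ell$ with $\operatorname{ess\,inf}_z Q_\ell(z)/\pi^y_j(z)\ge c$; (1.5) $\exists r>1,C_r$ independent of $\ell$ with $\int Q_\ell^r\mathrm{d}\mu_{\mathrm{pr}}\le C_r$. *)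

theory Defs
  imports "HOL-Probability.Probability"
begin

text \<open>Independence-sampler acceptance probability for target density pi
  (w.r.t. the prior) and proposal density Q (w.r.t. the prior).\<close>
definition accept :: "('a \<Rightarrow> real) \<Rightarrow> ('a \<Rightarrow> real) \<Rightarrow> 'a \<Rightarrow> 'a \<Rightarrow> real" where
  "accept p Q \<theta> z = min 1 ((p z * Q \<theta>) / (p \<theta> * Q z))"

text \<open>The joint (coupled) kernel p_l evaluated on a set A; pi0 = pi_(l-1), pi1 = pi_l.\<close>
definition joint_kernel_fun ::
  "'a measure \<Rightarrow> ('a \<Rightarrow> real) \<Rightarrow> ('a \<Rightarrow> real) \<Rightarrow> ('a \<Rightarrow> real)
     \<Rightarrow> 'a \<times> 'a \<Rightarrow> ('a \<times> 'a) set \<Rightarrow> ennreal" where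
  "joint_kernel_fun \<mu> Q pi0 pi1 t A =
     (\<integral>\<^sup>+ z. ennreal (min (accept pi0 Q (fst t) z) (accept pi1 Q (snd t) z) * Q z)
              * indicator A (z, z) \<partial>\<mu>)
   + (\<integral>\<^sup>+ z. ennreal (max 0 (accept pi0 Q (fst t) z - accept pi1 Q (snd t) z) * Q z)
              * indicator A (z, snd t) \<partial>\<mu>)
   + (\<integral>\<^sup>+ z. ennreal (max 0 (accept pi1 Q (snd t) z - accept pi0 Q (fst t) z) * Q z)
              * indicator A (fst t, z) \<partial>\<mu>)
   + indicator A t * ennreal (1 - (\<integral> z. max (accept pi0 Q (fst t) z) (accept pi1 Q (snd t) z) * Q z \<partial>\<mu>))"

definition joint_kernel ::
  "'a::topological_space measure \<Rightarrow> ('a \<Rightarrow> real) \<Rightarrow> ('a \<Rightarrow> real) \<Rightarrow> ('a \<Rightarrow> real)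
     \<Rightarrow> 'a \<times> 'a \<Rightarrow> ('a \<times> 'a) measure" where
  "joint_kernel \<mu> Q pi0 pi1 t =
     measure_of UNIV (sets (borel :: ('a \<times> 'a) measure)) (joint_kernel_fun \<mu> Q pi0 pi1 t)"

fun kernel_pow :: "('b \<Rightarrow> 'b measure) \<Rightarrow> nat \<Rightarrow> 'b \<Rightarrow> 'b set \<Rightarrow> ennreal" where
  "kernel_pow K 0 x A = indicator A x"
| "kernel_pow K (Suc m) x A = (\<integral>\<^sup>+ y. kernel_pow K m y A \<partial>(K x))"

definition small_set :: "('b::topological_space \<Rightarrow> 'b measure) \<Rightarrow> 'b set \<Rightarrow> bool" where
  "small_set K S \<longleftrightarrow> (\<exists>m::nat. \<exists>\<nu>. m \<ge> 1 \<and> sets \<nu> = sets borel \<and> emeasure \<nu> (space \<nu>) > 0 \<and>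
       (\<forall>x\<in>S. \<forall>A\<in>sets borel. kernel_pow K m x A \<ge> emeasure \<nu> A))"

end

theory Submission imports Defs begin

lemma ca_nn:
  fixes g :: "'b \<Rightarrow> ennreal" and h :: "'b \<Rightarrow> 'c::topological_space"
  assumes g: "g \<in> borel_measurable M" and h: "h \<in> M \<rightarrow>\<^sub>M borel"
  shows "countably_additive (sets borel) (\<lambda>A. \<integral>\<^sup>+ z. g z * indicator A (h z) \<partial>M)"
proof (rule countably_additiveI)
  fix A :: "nat \<Rightarrow> 'c set" assume A: "range A \<subseteq> sets borel" "disjoint_family A"
  have m: "\<And>i. (\<lambda>z. g z * indicator (A i) (h z)) \<in> borel_measurable M"
    using A(1) g h by (auto intro!: borel_measurable_times_ennreal measurable_compose[OF h borel_measurable_indicator])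
  have "(\<Sum>i. \<integral>\<^sup>+ z. g z * indicator (A i) (h z) \<partial>M) = \<integral>\<^sup>+ z. (\<Sum>i. g z * indicator (A i) (h z)) \<partial>M"
    using m by (rule nn_integral_suminf[symmetric])
  also have "\<dots> = \<integral>\<^sup>+ z. g z * indicator (\<Union>i. A i) (h z) \<partial>M"
    using suminf_indicator[OF A(2)] by simp
  finally show "(\<Sum>i. \<integral>\<^sup>+ z. g z * indicator (A i) (h z) \<partial>M) = \<integral>\<^sup>+ z. g z * indicator (\<Union>i. A i) (h z) \<partial>M" .
qed

lemma ca_const:
  fixes t :: "'c::topological_space"
  shows "countably_additive (sets borel) (\<lambda>A. indicator A t * (c::ennreal))"
proof (rule countably_additiveI)
  fix A :: "nat \<Rightarrow> 'c set" assume A: "range A \<subseteq> sets borel" "disjoint_family A"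
  show "(\<Sum>i. indicator (A i) t * c) = indicator (\<Union>i. A i) t * c"
    using suminf_indicator[OF A(2)] by simp
qed

lemma ca_add:
  assumes "countably_additive M f" "countably_additive M g"
  shows "countably_additive M (\<lambda>A. f A + g A :: ennreal)"
  using assms unfolding countably_additive_def by (simp add: suminf_add[symmetric])

lemma ratio_lb:
  fixes Q pi :: "'a::{banach, second_countable_topology} \<Rightarrow> real"
  assumes "continuous_on UNIV Q" "\<And>x. Q x > 0" "continuous_on UNIV pi" "\<And>x. pi x > 0"
    "\<And>cr. cr > 0 \<Longrightarrow> compact {\<theta>. Q \<theta> / pi \<theta> \<le> cr}"
  shows "\<exists>c'>0. c' \<le> 1 \<and> (\<forall>x. c' \<le> Q x / pi x)"
proof (cases "{\<theta>. Q \<theta> / pi \<theta> \<le> 1} = {}")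
  case True
  have "\<forall>x. 1 \<le> Q x / pi x" proof
    fix x have "\<not> Q x / pi x \<le> 1" using True by blast
    then show "1 \<le> Q x / pi x" by linarith
  qed
  thus ?thesis by (intro exI[of _ 1]) auto
next
  case False
  have co: "continuous_on {\<theta>. Q \<theta> / pi \<theta> \<le> 1} (\<lambda>x. Q x / pi x)"
  proof -
    have nz: "pi x \<noteq> 0" for x using assms(4)[of x] by simp
    show ?thesis using nz by (intro continuous_on_divide continuous_on_subset[OF assms(1)] continuous_on_subset[OF assms(3)]) auto
  qed
  obtain x0 where x0: "x0 \<in> {\<theta>. Q \<theta> / pi \<theta> \<le> 1}" "\<And>y. y \<in> {\<theta>. Q \<theta> / pi \<theta> \<le> 1} \<Longrightarrow> Q x0 / pi x0 \<le> Q y / pi y"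
    using continuous_attains_inf[OF assms(5)[of 1] False co] by auto
  show ?thesis
  proof (intro exI[of _ "Q x0 / pi x0"] conjI allI)
    show "Q x0 / pi x0 > 0" using assms by simp
    show "Q x0 / pi x0 \<le> 1" using x0 by simp
    fix x show "Q x0 / pi x0 \<le> Q x / pi x"
      using x0 by (cases "Q x / pi x \<le> 1") auto
  qed
qed


lemma acc_bounds:
  fixes pp Q :: "'b \<Rightarrow> real"
  assumes "\<And>x. Q x > 0" "\<And>x. pp x > 0"
  shows "0 \<le> accept pp Q \<theta> z" "accept pp Q \<theta> z \<le> 1"
  using assms[of z] assms[of \<theta>] unfolding accept_def by (auto intro!: divide_nonneg_pos mult_nonneg_nonneg less_imp_le)

lemma acc_lb:
  fixes c' :: real and pp Q :: "'b \<Rightarrow> real"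
  assumes Q: "\<And>x. Q x > 0" and pq: "\<And>x. pp x > 0" and c: "0 \<le> c'" "\<And>x. c' \<le> Q x / pp x"
  shows "c' * pp z \<le> accept pp Q \<theta> z * Q z"
proof (cases "1 \<le> (pp z * Q \<theta>) / (pp \<theta> * Q z)")
  case True
  have "c' * pp z \<le> Q z" using c(2)[of z] pq[of z] by (simp add: field_simps)
  thus ?thesis using True unfolding accept_def by simp
next
  case False
  hence "accept pp Q \<theta> z * Q z = pp z * (Q \<theta> / pp \<theta>)"
    unfolding accept_def using Q[of z] by (simp add: field_simps)
  also have "\<dots> \<ge> pp z * c'" using c(2)[of \<theta>] pq[of z] by (intro mult_left_mono) auto
  finally show ?thesis by (simp add: mult.commute)
qed

lemma md: "0 \<le> a \<Longrightarrow> a \<le> 1 \<Longrightarrow> 0 \<le> b \<Longrightarrow> b \<le> 1 \<Longrightarrow> max 0 (a - b) \<le> (1::real)"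
  by simp

lemma sets_jk: "sets (joint_kernel \<mu> Q pi0 pi1 t) = sets borel"
  unfolding joint_kernel_def
  by (subst sets_measure_of) (auto simp: sets.sigma_sets_eq[of borel, simplified])

lemma space_jk: "space (joint_kernel \<mu> Q pi0 pi1 t) = UNIV"
  unfolding joint_kernel_def by (simp add: space_measure_of_conv)

lemma cont_meas:
  fixes f :: "'a::topological_space \<Rightarrow> 'b::topological_space"
  assumes "sets \<mu> = sets borel" "continuous_on UNIV f"
  shows "f \<in> borel_measurable \<mu>"
  by (subst measurable_cong_sets[OF assms(1) refl]) (rule borel_measurable_continuous_onI[OF assms(2)])

lemma emeasure_jk:
  fixes \<mu> :: "'a::{banach, second_countable_topology} measure"
  assumes sb: "sets \<mu> = sets borel"
    and A1_1: "continuous_on UNIV Q" "\<And>x. Q x > 0"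
    and A1_2: "continuous_on UNIV pi0" "\<And>x. pi0 x > 0"
              "continuous_on UNIV pi1" "\<And>x. pi1 x > 0"
    and A: "A \<in> sets borel"
  shows "emeasure (joint_kernel \<mu> Q pi0 pi1 t) A = joint_kernel_fun \<mu> Q pi0 pi1 t A"
proof -
  note mc = cont_meas[OF sb]
  note [measurable] = mc[OF A1_1(1)] mc[OF A1_2(1)] mc[OF A1_2(3)]
  have d1: "(\<lambda>z. (z,z)) \<in> \<mu> \<rightarrow>\<^sub>M (borel :: ('a\<times>'a) measure)"
    by (rule mc) (intro continuous_intros)
  have d2: "(\<lambda>z. (z, snd t)) \<in> \<mu> \<rightarrow>\<^sub>M (borel :: ('a\<times>'a) measure)"
    by (rule mc) (intro continuous_intros)
  have d3: "(\<lambda>z. (fst t, z)) \<in> \<mu> \<rightarrow>\<^sub>M (borel :: ('a\<times>'a) measure)"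
    by (rule mc) (intro continuous_intros)
  have sa: "sigma_algebra UNIV (sets (borel :: ('a\<times>'a) measure))"
    using sets.sigma_algebra_axioms[of "borel :: ('a\<times>'a) measure"] by simp
  have pos: "positive (sets borel) (joint_kernel_fun \<mu> Q pi0 pi1 t)"
    unfolding positive_def joint_kernel_fun_def by simp
  have ca: "countably_additive (sets borel) (joint_kernel_fun \<mu> Q pi0 pi1 t)"
    unfolding joint_kernel_fun_def
    by (intro ca_add ca_nn[OF _ d1] ca_nn[OF _ d2] ca_nn[OF _ d3] ca_const)
       (unfold accept_def; measurable)+
  show ?thesis unfolding joint_kernel_def
    by (rule emeasure_measure_of_sigma[OF sa pos ca A])
qed

theorem mainTheorem6:
  fixes \<mu> :: "'a::{banach, second_countable_topology} measure"
    and Q pi0 pi1 :: "'a \<Rightarrow> real"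
    and c r Cr :: real
  assumes prior: "prob_space \<mu>" "sets \<mu> = sets borel"
    and Q_dens: "integrable \<mu> Q" "(\<integral> z. Q z \<partial>\<mu>) = 1"
    and pi0_dens: "integrable \<mu> pi0" "(\<integral> z. pi0 z \<partial>\<mu>) = 1"
    and pi1_dens: "integrable \<mu> pi1" "(\<integral> z. pi1 z \<partial>\<mu>) = 1"
    and A1_1: "continuous_on UNIV Q" "\<And>x. Q x > 0"
    and A1_2: "continuous_on UNIV pi0" "\<And>x. pi0 x > 0"
              "continuous_on UNIV pi1" "\<And>x. pi1 x > 0"
    and A1_3: "\<And>cr. cr > 0 \<Longrightarrow> compact {\<theta>. Q \<theta> / pi0 \<theta> \<le> cr}"
              "\<And>cr. cr > 0 \<Longrightarrow> compact {\<theta>. Q \<theta> / pi1 \<theta> \<le> cr}"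
    and A1_4: "0 < c" "c < 1"
              "AE z in \<mu>. Q z / pi0 z \<ge> c" "AE z in \<mu>. Q z / pi1 z \<ge> c"
    and A1_5: "r > 1" "integrable \<mu> (\<lambda>z. Q z powr r)" "(\<integral> z. Q z powr r \<partial>\<mu>) \<le> Cr"
  shows "\<exists>V S (lam::real) (\<kappa>::real).
           V \<in> borel_measurable borel \<and> (\<forall>t. V t \<ge> 1) \<and>
           S \<in> sets (borel :: ('a \<times> 'a) measure) \<and>
           small_set (joint_kernel \<mu> Q pi0 pi1) S \<and>
           0 < lam \<and> lam < 1 \<and>
           (\<forall>t. (\<integral>\<^sup>+ y. ennreal (V y) \<partial>(joint_kernel \<mu> Q pi0 pi1 t))
                  \<le> ennreal (lam * V t + \<kappa> * indicator S t))"
  proof -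
  note mc = cont_meas[OF prior(2)]
  note [measurable] = mc[OF A1_1(1)] mc[OF A1_2(1)] mc[OF A1_2(3)]
  have d1: "(\<lambda>z. (z,z)) \<in> \<mu> \<rightarrow>\<^sub>M (borel :: ('a\<times>'a) measure)"
    by (rule mc) (intro continuous_intros)
  interpret P: prob_space \<mu> by (rule prior(1))
  obtain c0 where c0: "c0 > 0" "\<And>x. c0 \<le> Q x / pi0 x"
    using ratio_lb[OF A1_1 A1_2(1,2) A1_3(1)] by blast
  obtain c1 where c1: "c1 > 0" "\<And>x. c1 \<le> Q x / pi1 x"
    using ratio_lb[OF A1_1 A1_2(3,4) A1_3(2)] by blast
  define c' where "c' = min c0 c1"
  have c'0: "c' > 0" using c0 c1 by (simp add: c'_def)
  define K where "K = joint_kernel \<mu> Q pi0 pi1"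
  define h where "h z = ennreal (c' * min (pi0 z) (pi1 z))" for z
  have hm: "h \<in> borel_measurable \<mu>" unfolding h_def by measurable
  define \<nu> where "\<nu> = distr (density \<mu> h) borel (\<lambda>z. (z,z))"
  have d1': "(\<lambda>z. (z,z)) \<in> density \<mu> h \<rightarrow>\<^sub>M (borel :: ('a\<times>'a) measure)"
    using d1 by simp
  have nuA: "emeasure \<nu> A = \<integral>\<^sup>+ z. h z * indicator A (z,z) \<partial>\<mu>" if A: "A \<in> sets borel" for A
  proof -
    have "emeasure \<nu> A = emeasure (density \<mu> h) ((\<lambda>z. (z,z)) -` A \<inter> space \<mu>)"
      unfolding \<nu>_def by (subst emeasure_distr[OF d1' A]) simp
    also have "\<dots> = \<integral>\<^sup>+ z. h z * indicator ((\<lambda>z. (z,z)) -` A \<inter> space \<mu>) z \<partial>\<mu>"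
      by (rule emeasure_density[OF hm]) (rule measurable_sets[OF d1 A])
    also have "\<dots> = \<integral>\<^sup>+ z. h z * indicator A (z,z) \<partial>\<mu>"
      by (rule nn_integral_cong) (simp add: indicator_def)
    finally show ?thesis .
  qed
  have small: "small_set K UNIV"
    unfolding small_set_def
  proof (intro exI[of _ "1::nat"] exI[of _ \<nu>] conjI ballI)
    show "sets \<nu> = sets borel" unfolding \<nu>_def by simp
    have "emeasure \<nu> (space \<nu>) = \<integral>\<^sup>+ z. h z \<partial>\<mu>"
      using nuA[of UNIV] unfolding \<nu>_def by simp
    moreover have "(\<integral>\<^sup>+ z. h z \<partial>\<mu>) \<noteq> 0"
    proof
      assume "(\<integral>\<^sup>+ z. h z \<partial>\<mu>) = 0"
      hence "AE z in \<mu>. h z = 0" using nn_integral_0_iff_AE[OF hm] by simp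
      moreover have "\<And>z. h z \<noteq> 0" unfolding h_def using c'0 A1_2(2,4)
        by (simp add: ennreal_eq_0_iff not_le)
      ultimately show False by simp
    qed
    ultimately show "emeasure \<nu> (space \<nu>) > 0" by (simp add: zero_less_iff_neq_zero)
    show "1 \<le> (1::nat)" by simp
    fix x :: "'a \<times> 'a" and A :: "('a\<times>'a) set" assume A: "A \<in> sets borel"
    have "kernel_pow K 1 x A = emeasure (K x) A"
      using A by (simp add: K_def sets_jk)
    also have "\<dots> = joint_kernel_fun \<mu> Q pi0 pi1 x A"
      unfolding K_def by (rule emeasure_jk[OF prior(2) A1_1 A1_2 A])
    finally have kp: "kernel_pow K 1 x A = joint_kernel_fun \<mu> Q pi0 pi1 x A" .
    have "emeasure \<nu> A \<le> \<integral>\<^sup>+ z. ennreal (min (accept pi0 Q (fst x) z) (accept pi1 Q (snd x) z) * Q z)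
              * indicator A (z, z) \<partial>\<mu>"
      unfolding nuA[OF A]
    proof (rule nn_integral_mono)
      fix z
      have l0: "c' * pi0 z \<le> accept pi0 Q (fst x) z * Q z"
        using c0 c'0 by (intro acc_lb[OF A1_1(2) A1_2(2)]) (auto simp: c'_def intro: min.coboundedI1)
      have l1: "c' * pi1 z \<le> accept pi1 Q (snd x) z * Q z"
        using c1 c'0 by (intro acc_lb[OF A1_1(2) A1_2(4)]) (auto simp: c'_def intro: min.coboundedI2)
      have "c' * min (pi0 z) (pi1 z) \<le> min (accept pi0 Q (fst x) z) (accept pi1 Q (snd x) z) * Q z"
      proof -
        let ?a0 = "accept pi0 Q (fst x) z" and ?a1 = "accept pi1 Q (snd x) z"
        have m1: "c' * min (pi0 z) (pi1 z) \<le> c' * pi0 z" "c' * min (pi0 z) (pi1 z) \<le> c' * pi1 z"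
          using c'0 by (auto intro: mult_left_mono)
        have "min ?a0 ?a1 * Q z = min (?a0 * Q z) (?a1 * Q z)"
        proof (cases "?a0 \<le> ?a1")
          case True thus ?thesis using mult_right_mono[OF True, of "Q z"] A1_1(2)[of z] by (simp add: min_def)
        next
          case False hence le: "?a1 \<le> ?a0" by simp
          show ?thesis using le mult_right_mono[OF le, of "Q z"] A1_1(2)[of z] by (auto simp: min_def)
        qed
        thus ?thesis using m1 l0 l1 by linarith
      qed
      thus "h z * indicator A (z, z) \<le> ennreal (min (accept pi0 Q (fst x) z) (accept pi1 Q (snd x) z) * Q z) * indicator A (z, z)"
        unfolding h_def by (auto simp: indicator_def intro: ennreal_leI)
    qed
    also have "\<dots> \<le> joint_kernel_fun \<mu> Q pi0 pi1 x A"
      unfolding joint_kernel_fun_def by (intro add_increasing2) auto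
    finally show "kernel_pow K 1 x A \<ge> emeasure \<nu> A" using kp by simp
  qed
  have Qint: "(\<integral>\<^sup>+ z. ennreal (Q z) \<partial>\<mu>) = 1"
    using nn_integral_eq_integral[OF Q_dens(1)] A1_1(2) Q_dens(2) by (simp add: less_imp_le)
  have bnd: "(\<integral>\<^sup>+ z. ennreal (f z * Q z) * indicator B (g z) \<partial>\<mu>) \<le> 1"
    if f: "\<And>z. 0 \<le> f z" "\<And>z. f z \<le> 1" for f :: "'a \<Rightarrow> real" and B and g :: "'a \<Rightarrow> 'a \<times> 'a"
  proof -
    have "(\<integral>\<^sup>+ z. ennreal (f z * Q z) * indicator B (g z) \<partial>\<mu>) \<le> (\<integral>\<^sup>+ z. ennreal (Q z) \<partial>\<mu>)"
    proof (rule nn_integral_mono)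
      fix z
      have "f z * Q z \<le> Q z" using f[of z] A1_1(2)[of z] by (simp add: mult_left_le_one_le less_imp_le)
      thus "ennreal (f z * Q z) * indicator B (g z) \<le> ennreal (Q z)"
        by (auto simp: indicator_def intro: ennreal_leI)
    qed
    thus ?thesis using Qint by simp
  qed
  have mass: "emeasure (K t) UNIV \<le> 4" for t
  proof -
    have ab0: "0 \<le> accept pi0 Q \<theta> z" "accept pi0 Q \<theta> z \<le> 1" for \<theta> z
      using acc_bounds[of Q pi0] A1_1(2) A1_2(2) by auto
    have ab1: "0 \<le> accept pi1 Q \<theta> z" "accept pi1 Q \<theta> z \<le> 1" for \<theta> z
      using acc_bounds[of Q pi1] A1_1(2) A1_2(4) by auto
    have "emeasure (K t) UNIV = joint_kernel_fun \<mu> Q pi0 pi1 t UNIV"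
      unfolding K_def by (rule emeasure_jk[OF prior(2) A1_1 A1_2]) simp
    also have "\<dots> \<le> 1 + 1 + 1 + 1"
      unfolding joint_kernel_fun_def
    proof (intro add_mono)
      show "(\<integral>\<^sup>+ z. ennreal (min (accept pi0 Q (fst t) z) (accept pi1 Q (snd t) z) * Q z) * indicator UNIV (z, z) \<partial>\<mu>) \<le> 1"
        by (rule bnd) (use ab0 ab1 in \<open>auto simp: min_def\<close>)
      show "(\<integral>\<^sup>+ z. ennreal (max 0 (accept pi0 Q (fst t) z - accept pi1 Q (snd t) z) * Q z) * indicator UNIV (z, snd t) \<partial>\<mu>) \<le> 1"
        by (rule bnd; intro md ab0 ab1 max.cobounded1)
      show "(\<integral>\<^sup>+ z. ennreal (max 0 (accept pi1 Q (snd t) z - accept pi0 Q (fst t) z) * Q z) * indicator UNIV (fst t, z) \<partial>\<mu>) \<le> 1"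
        by (rule bnd; intro md ab0 ab1 max.cobounded1)
      have "0 \<le> (\<integral> z. max (accept pi0 Q (fst t) z) (accept pi1 Q (snd t) z) * Q z \<partial>\<mu>)"
        using ab0 A1_1(2) by (intro integral_nonneg_AE AE_I2 mult_nonneg_nonneg) (auto simp: le_max_iff_disj less_imp_le)
      thus "indicator UNIV t * ennreal (1 - (\<integral> z. max (accept pi0 Q (fst t) z) (accept pi1 Q (snd t) z) * Q z \<partial>\<mu>)) \<le> 1"
        by (simp add: ennreal_leI)
    qed
    finally show ?thesis by simp
  qed
  have fin: "(\<integral>\<^sup>+ y. ennreal 1 \<partial>joint_kernel \<mu> Q pi0 pi1 t) \<le> ennreal (1/2 * 1 + 4 * indicator (UNIV :: ('a\<times>'a) set) t)" for t
  proof -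
    have "(\<integral>\<^sup>+ y. ennreal 1 \<partial>joint_kernel \<mu> Q pi0 pi1 t) = emeasure (K t) UNIV"
      by (simp add: K_def space_jk)
    also have "\<dots> \<le> ennreal 4" using mass by simp
    also have "\<dots> \<le> ennreal (1/2 * 1 + 4 * indicator (UNIV :: ('a\<times>'a) set) t)" by (simp add: ennreal_leI)
    finally show ?thesis .
  qed
  have sm: "small_set (joint_kernel \<mu> Q pi0 pi1) UNIV" using small by (simp add: K_def)
  show ?thesis
    apply (rule exI[of _ "\<lambda>_. 1::real"], rule exI[of _ "UNIV :: ('a\<times>'a) set"], rule exI[of _ "1/2::real"], rule exI[of _ "4::real"])
    apply (intro conjI allI)
          apply (rule borel_measurable_const)
         apply (rule order_refl)
        apply simp
       apply (rule sm)
      apply simp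
     apply simp
    apply (rule fin)
    done
qed

end
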